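(* Let $p$ be a prime and let $c,e,j$ be residues mod $p$ with $c\notin\{0,1\}$, $j\notin\{0,1\}$ and $e\notin\{0,\,j,\,c,\,c+j-1,\,jc\}$. Let $m\ge 2$ be an integer dividing $p-1$. Define \[ F(x)=\frac{1-jx}{1-j},\qquad G(x)=\frac{e-xjc}{e-jc},\qquad H(x)=\frac{xj(1-c)+e-j}{e-jc}. \] Suppose there is $x\not\equiv 0$ which is an $m$th power mod $p$ such that $F(x)$ is a non-zero $m$th power mod $p$, and neither $G(x)$ nor $H(x)$ is a non-zero $m$th power mod $p$. Then the three cyclic transversals generated by $0\circ 0=0$, $0\circ 1=j$ and $0\circ c=e$, i.e. the partial latin square \[ \{(i,i,i),\ (i,1+i,j+i),\ (i,c+i,e+i)\mid 0\le i<p\}, \] can be completed to a diagonally cyclic latin square of order $p$.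
   Context: Triples $(r,s,t)$ denote symbol $t$ in row $r$, column $s$; all indices are modulo $p$. A latin square with operation $\circ$ of odd order $n$ is diagonally cyclic if $i\circ j=k$ implies $(i+1)\circ(j+1)=k+1$ for all cells. A partial latin square is completed by a latin square if it is contained in it (as a set of triples). *)

theory Defs
  imports "HOL-Number_Theory.Number_Theory"
begin

definition latin_square :: "int \<Rightarrow> (int \<Rightarrow> int \<Rightarrow> int) \<Rightarrow> bool" where
  "latin_square n op \<longleftrightarrow>
     (\<forall>r\<in>{0..<n}. bij_betw (\<lambda>s. op r s) {0..<n} {0..<n}) \<and>
     (\<forall>s\<in>{0..<n}. bij_betw (\<lambda>r. op r s) {0..<n} {0..<n})"

definition diag_cyclic :: "int \<Rightarrow> (int \<Rightarrow> int \<Rightarrow> int) \<Rightarrow> bool" where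
  "diag_cyclic n op \<longleftrightarrow>
     (\<forall>r\<in>{0..<n}. \<forall>s\<in>{0..<n}. op ((r + 1) mod n) ((s + 1) mod n) = (op r s + 1) mod n)"

definition triples :: "int \<Rightarrow> (int \<Rightarrow> int \<Rightarrow> int) \<Rightarrow> (int \<times> int \<times> int) set" where
  "triples n op = {(r, s, op r s) | r s. r \<in> {0..<n} \<and> s \<in> {0..<n}}"

definition zdiv :: "int \<Rightarrow> int \<Rightarrow> int \<Rightarrow> int" where
  "zdiv p a b = (THE z. 0 \<le> z \<and> z < p \<and> [b * z = a] (mod p))"

definition mth_power :: "int \<Rightarrow> nat \<Rightarrow> int \<Rightarrow> bool" where
  "mth_power p m z \<longleftrightarrow> (\<exists>y::int. [y ^ m = z] (mod p))"

definition nonzero_mth_power :: "int \<Rightarrow> nat \<Rightarrow> int \<Rightarrow> bool" where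
  "nonzero_mth_power p m z \<longleftrightarrow> \<not> [z = 0] (mod p) \<and> mth_power p m z"

end

theory Submission
  imports Defs
begin

lemma NP_iff: "nonzero_mth_power p m z \<longleftrightarrow> \<not> p dvd z \<and> (\<exists>y. p dvd (y^m - z))"
  unfolding nonzero_mth_power_def mth_power_def by (simp add: cong_iff_dvd_diff)

lemma inv_ex:
  fixes p a :: int
  assumes "prime p" "\<not> p dvd a"
  shows "\<exists>a'. p dvd (a*a' - 1)"
proof -
  have "coprime a p" using assms prime_imp_coprime coprime_commute by blast
  then obtain x where "[a * x = 1] (mod p)" using cong_solve_coprime_int by blast
  thus ?thesis by (auto simp: cong_iff_dvd_diff)
qed

lemma pcancel:
  fixes p a b :: int
  assumes "prime p" "\<not> p dvd a" "p dvd a*b"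
  shows "p dvd b"
  using assms prime_dvd_mult_iff by blast

lemma lin2: "(p::int) dvd X \<Longrightarrow> p dvd Y \<Longrightarrow> Z = X*u + Y*v \<Longrightarrow> p dvd Z"
  by simp

lemma lin3: "(p::int) dvd X \<Longrightarrow> p dvd Y \<Longrightarrow> p dvd W \<Longrightarrow> Z = X*u + Y*v + W*w \<Longrightarrow> p dvd Z"
  by simp

lemma pow_diff_dvd: "(p::int) dvd a - b \<Longrightarrow> p dvd a^n - b^n"
  using cong_pow[of a b p n] by (simp add: cong_iff_dvd_diff)

lemma NP_mult:
  fixes p a b :: int
  assumes "prime p" "nonzero_mth_power p m a" "nonzero_mth_power p m b"
  shows "nonzero_mth_power p m (a*b)"
proof -
  obtain u v where u: "p dvd u^m - a" and v: "p dvd v^m - b" and na: "\<not> p dvd a" and nb: "\<not> p dvd b"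
    using assms by (auto simp: NP_iff)
  have "\<not> p dvd a*b" using assms(1) na nb prime_dvd_mult_iff by blast
  moreover have "p dvd (u*v)^m - a*b"
    by (rule lin2[OF u v, of _ "v^m" a]) (simp add: power_mult_distrib algebra_simps)
  ultimately show ?thesis by (auto simp: NP_iff)
qed

lemma NP_inv:
  fixes p a b :: int
  assumes "prime p" "nonzero_mth_power p m a" "p dvd a*b - 1" "m > 0"
  shows "nonzero_mth_power p m b"
proof -
  obtain u where u: "p dvd u^m - a" and na: "\<not> p dvd a"
    using assms by (auto simp: NP_iff)
  have p1: "\<not> p dvd 1" using assms(1) by (meson not_prime_unit)
  have nb: "\<not> p dvd b"
  proof
    assume "p dvd b"
    hence "p dvd a*b" by simp
    hence "p dvd a*b - (a*b - 1)" using assms(3) by (rule dvd_diff)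
    thus False using p1 by simp
  qed
  have nu: "\<not> p dvd u"
  proof
    assume "p dvd u"
    hence "p dvd u^m" using assms(4) dvd_power[of m u] dvd_trans by blast
    hence "p dvd u^m - (u^m - a)" using u by (rule dvd_diff)
    thus False using na by simp
  qed
  obtain u' where u': "p dvd u*u' - 1" using inv_ex[OF assms(1) nu] by blast
  have "p dvd (u*u')^m - 1^m" using pow_diff_dvd[OF u'] .
  hence w: "p dvd (u*u')^m - 1" by simp
  have "p dvd u'^m - b"
    by (rule lin3[OF w u assms(3), of _ "b" "-(b*u'^m)" "-(u'^m)"]) (simp add: power_mult_distrib algebra_simps)
  thus ?thesis using nb by (auto simp: NP_iff)
qed

lemma NP_one: "prime (p::int) \<Longrightarrow> nonzero_mth_power p m 1"
  using not_prime_unit[of p] by (auto simp: NP_iff intro!: exI[of _ 1])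

lemma NP_cong: "[a = b] (mod p) \<Longrightarrow> nonzero_mth_power p m a \<Longrightarrow> nonzero_mth_power p m (b::int)"
  unfolding nonzero_mth_power_def mth_power_def
  by (meson cong_sym cong_trans)

lemma pw_inj:
  fixes p a b z y1 y2 :: int and D :: "int \<Rightarrow> bool"
  assumes pp: "prime p" and na: "\<not> p dvd a" and nz: "\<not> p dvd z" and bz: "p dvd b - a*z"
    and clos: "\<And>y y'. p dvd y' - z*y \<Longrightarrow> D y' \<Longrightarrow> D y"
    and eq: "p dvd (if D y1 then a*y1 else b*y1) - (if D y2 then a*y2 else b*y2)"
  shows "p dvd y1 - y2"
proof -
  have naz: "\<not> p dvd a*z" using pp na nz prime_dvd_mult_iff by blast
  show ?thesis
  proof (cases "D y1"; cases "D y2")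
    assume "D y1" "D y2"
    hence "p dvd a*(y1-y2)" using eq by (simp add: algebra_simps)
    thus ?thesis using pcancel[OF pp na] by blast
  next
    assume h: "\<not> D y1" "\<not> D y2"
    hence "p dvd b*y1 - b*y2" using eq by simp
    hence "p dvd a*z*(y1-y2)" by (rule lin2[OF _ bz, of _ _ 1 "y2 - y1"]) (simp add: algebra_simps)
    thus ?thesis using pcancel[OF pp naz] by blast
  next
    assume h: "D y1" "\<not> D y2"
    hence "p dvd a*y1 - b*y2" using eq by simp
    hence "p dvd a*(y1 - z*y2)" by (rule lin2[OF _ bz, of _ _ 1 "y2"]) (simp add: algebra_simps)
    hence "p dvd y1 - z*y2" using pcancel[OF pp na] by blast
    hence "D y2" using clos h(1) by blast
    thus ?thesis using h by blast
  next
    assume h: "\<not> D y1" "D y2"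
    hence "p dvd b*y1 - a*y2" using eq by simp
    hence "p dvd a*(y2 - z*y1)" by (rule lin2[OF _ bz, of _ _ "-1" "y1"]) (simp add: algebra_simps)
    hence "p dvd y2 - z*y1" using pcancel[OF pp na] by blast
    hence "D y1" using clos h(2) by blast
    thus ?thesis using h by blast
  qed
qed

lemma lin4: "(p::int) dvd X \<Longrightarrow> p dvd Y \<Longrightarrow> p dvd W \<Longrightarrow> p dvd V \<Longrightarrow> Z = X*u + Y*v + W*w + V*q \<Longrightarrow> p dvd Z"
  by simp

lemma modd: "(p::int) dvd a mod p - a"
  by (metis dvd_minus_mod dvd_diff_commute)

lemma range_eq: "(0::int) \<le> a \<Longrightarrow> a < p \<Longrightarrow> 0 \<le> b \<Longrightarrow> b < p \<Longrightarrow> p dvd a - b \<Longrightarrow> a = b"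
  by (metis mod_eq_dvd_iff mod_pos_pos_trivial)

lemma zdiv_prop:
  fixes p a b :: int
  assumes pp: "prime p" and nb: "\<not> p dvd b"
  shows "p dvd b * zdiv p a b - a"
proof -
  obtain b' where b': "p dvd b*b' - 1" using inv_ex[OF pp nb] by blast
  have p0: "p > 0" using pp prime_gt_0_int by blast
  define z where "z = (a*b') mod p"
  have ex: "0 \<le> z \<and> z < p \<and> [b * z = a] (mod p)"
  proof -
    have "p dvd b*z - a"
      by (rule lin2[OF modd[of p "a*b'"] b', of _ b a]) (simp add: z_def algebra_simps)
    thus ?thesis using p0 by (simp add: z_def cong_iff_dvd_diff)
  qed
  have uq: "z' = z" if "0 \<le> z' \<and> z' < p \<and> [b * z' = a] (mod p)" for z'
  proof -
    have "p dvd b*z' - a" "p dvd b*z - a" using that ex by (auto simp: cong_iff_dvd_diff)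
    hence "p dvd b*(z' - z)" by (rule lin2[of _ _ _ _ 1 "-1"]) (simp add: algebra_simps)
    hence "p dvd z' - z" using pcancel[OF pp nb] by blast
    thus ?thesis using range_eq that ex by blast
  qed
  have "zdiv p a b = z" unfolding zdiv_def using ex uq by (rule the_equality)
  thus ?thesis using ex by (simp add: cong_iff_dvd_diff)
qed

theorem lemma4:
  fixes p :: int and m :: nat and c e j :: int
  assumes "prime p"
    and "\<not> [c = 0] (mod p)" and "\<not> [c = 1] (mod p)"
    and "\<not> [j = 0] (mod p)" and "\<not> [j = 1] (mod p)"
    and "\<not> [e = 0] (mod p)" and "\<not> [e = j] (mod p)" and "\<not> [e = c] (mod p)"
    and "\<not> [e = c + j - 1] (mod p)" and "\<not> [e = j * c] (mod p)"
    and "m \<ge> 2" and "int m dvd p - 1"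
    and "\<exists>x. \<not> [x = 0] (mod p) \<and> mth_power p m x
           \<and> nonzero_mth_power p m (zdiv p (1 - j * x) (1 - j))
           \<and> \<not> nonzero_mth_power p m (zdiv p (e - x * j * c) (e - j * c))
           \<and> \<not> nonzero_mth_power p m (zdiv p (x * j * (1 - c) + e - j) (e - j * c))"
  shows "\<exists>op. latin_square p op \<and> diag_cyclic p op \<and>
           {(i, i, i) | i. i \<in> {0..<p}}
           \<union> {(i, (1 + i) mod p, (j + i) mod p) | i. i \<in> {0..<p}}
           \<union> {(i, (c + i) mod p, (e + i) mod p) | i. i \<in> {0..<p}}
           \<subseteq> triples p op"
proof -
  have pp: "prime p" by fact
  have p0: "p > 0" using pp prime_gt_0_int by blast
  have m0: "m > 0" using assms(11) by simp
  have nj: "\<not> p dvd j" using assms(4) by (simp add: cong_0_iff)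
  have nj1: "\<not> p dvd 1 - j" using assms(5) by (simp add: cong_iff_dvd_diff dvd_diff_commute)
  have nejc: "\<not> p dvd e - j*c" using assms(10) by (simp add: cong_iff_dvd_diff)
  obtain x where nx: "\<not> p dvd x" and mx: "mth_power p m x"
     and NF: "nonzero_mth_power p m (zdiv p (1 - j * x) (1 - j))"
     and NG: "\<not> nonzero_mth_power p m (zdiv p (e - x * j * c) (e - j * c))"
     and NH: "\<not> nonzero_mth_power p m (zdiv p (x * j * (1 - c) + e - j) (e - j * c))"
    using assms(13) by (auto simp: cong_0_iff)
  define Fz where "Fz = zdiv p (1 - j * x) (1 - j)"
  define Gz where "Gz = zdiv p (e - x * j * c) (e - j * c)"
  define Hz where "Hz = zdiv p (x * j * (1 - c) + e - j) (e - j * c)"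
  have hF: "p dvd (1-j)*Fz - (1 - j*x)" unfolding Fz_def using zdiv_prop[OF pp nj1] .
  have hG: "p dvd (e - j*c)*Gz - (e - x*j*c)" unfolding Gz_def using zdiv_prop[OF pp nejc] .
  have hH: "p dvd (e - j*c)*Hz - (x * j * (1 - c) + e - j)" unfolding Hz_def using zdiv_prop[OF pp nejc] .
  have NPx: "nonzero_mth_power p m x" using nx mx by (simp add: nonzero_mth_power_def cong_0_iff)
  have NPF: "nonzero_mth_power p m Fz" using NF Fz_def by simp
  have nF: "\<not> p dvd Fz" using NPF by (simp add: NP_iff)
  have nx1: "\<not> p dvd x - 1"
  proof
    assume h: "p dvd x - 1"
    have "p dvd (e - j*c)*(Gz - 1)"
      by (rule lin2[OF hG h, of _ 1 "-(j*c)"]) (simp add: algebra_simps)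
    hence "p dvd Gz - 1" using pcancel[OF pp nejc] by blast
    hence "[1 = Gz] (mod p)" by (simp add: cong_iff_dvd_diff dvd_diff_commute)
    hence "nonzero_mth_power p m Gz" using NP_cong NP_one[OF pp] by blast
    thus False using NG Gz_def by simp
  qed
  have njx: "\<not> p dvd j*(x-1)" using pp nj nx1 prime_dvd_mult_iff by blast
  obtain k where hk: "p dvd j*(x-1)*k - 1" using inv_ex[OF pp njx] by blast
  define t where "t = (e - j*x*c)*k"
  have ht: "p dvd j*(x-1)*t - (e - j*x*c)"
    by (rule lin2[OF hk hk, of _ "e - j*x*c" 0]) (simp add: t_def algebra_simps)
  define D where "D = (\<lambda>y. \<exists>w\<in>{t,t+1}. \<not> p dvd w \<and> (\<exists>h. nonzero_mth_power p m h \<and> p dvd y - h*w))"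
  have clos: "D y" if T: "nonzero_mth_power p m z" "p dvd y' - z*y" "D y'" for z y y'
  proof -
    obtain w h where w: "w\<in>{t,t+1}" "\<not> p dvd w" "nonzero_mth_power p m h" "p dvd y' - h*w"
      using T(3) D_def by blast
    have nz: "\<not> p dvd z" using T(1) by (simp add: NP_iff)
    obtain z' where z': "p dvd z*z' - 1" using inv_ex[OF pp nz] by blast
    have "nonzero_mth_power p m z'" using NP_inv[OF pp T(1) z' m0] .
    hence NP': "nonzero_mth_power p m (z'*h)" using NP_mult[OF pp] w(3) by blast
    have "p dvd y - z'*h*w"
      by (rule lin3[OF z' T(2) w(4), of _ "-y" "-z'" "z'"]) (simp add: algebra_simps)
    thus ?thesis unfolding D_def using w NP' by (metis mult.assoc)
  qed
  have Dcong: "D y'" if T: "p dvd y - y'" "D y" for y y'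
  proof -
    obtain w h where w: "w\<in>{t,t+1}" "\<not> p dvd w" "nonzero_mth_power p m h" "p dvd y - h*w"
      using T(2) D_def by blast
    have "p dvd y' - h*w" by (rule lin2[OF T(1) w(4), of _ "-1" 1]) (simp add: algebra_simps)
    thus ?thesis unfolding D_def using w by blast
  qed
  define f where "f = (\<lambda>y. if D y then j*y else j*x*y)"
  have fcong: "p dvd f y - f y'" if "p dvd y - y'" for y y'
  proof -
    have "p dvd y' - y" using that by (simp add: dvd_diff_commute)
    hence "D y = D y'" using Dcong that by blast
    thus ?thesis unfolding f_def using that
      by (auto simp: right_diff_distrib[symmetric] mult.assoc)
  qed
  have fD: "p dvd f y - j*y" if "D y \<or> p dvd y" for y
    using that unfolding f_def by (auto simp: algebra_simps)
  have finj: "p dvd y1 - y2" if "p dvd f y1 - f y2" for y1 y2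
  proof (rule pw_inj[OF pp nj nx, of "j*x" D])
    show "p dvd j * x - j * x" by simp
    show "\<And>y y'. p dvd y' - x * y \<Longrightarrow> D y' \<Longrightarrow> D y" using clos NPx by blast
    show "p dvd (if D y1 then j * y1 else j * x * y1) - (if D y2 then j * y2 else j * x * y2)"
      using that f_def by simp
  qed
  have ginj: "p dvd y1 - y2" if "p dvd (f y1 - y1) - (f y2 - y2)" for y1 y2
  proof (rule pw_inj[OF pp _ nF, of "j-1" "j*x-1" D])
    show "\<not> p dvd j - 1" using nj1 by (simp add: dvd_diff_commute)
    show "p dvd j * x - 1 - (j - 1) * Fz" by (rule lin2[OF hF hF, of _ 1 0]) (simp add: algebra_simps)
    show "\<And>y y'. p dvd y' - Fz * y \<Longrightarrow> D y' \<Longrightarrow> D y" using clos NPF by blast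
    show "p dvd (if D y1 then (j - 1) * y1 else (j * x - 1) * y1) - (if D y2 then (j - 1) * y2 else (j * x - 1) * y2)"
    proof -
      have e: "\<And>y. (if D y then (j-1)*y else (j*x-1)*y) = f y - y" by (simp add: f_def algebra_simps)
      show ?thesis using that by (simp only: e)
    qed
  qed
  have Dt: "D t \<or> p dvd t" unfolding D_def using NP_one[OF pp] by force
  have Dt1: "D (t+1) \<or> p dvd t+1" unfolding D_def using NP_one[OF pp] by force
  have hA: "p dvd j*(x-1)*(t+c) - (e - j*c)"
    by (rule lin2[OF ht ht, of _ 1 0]) (simp add: algebra_simps)
  have hB: "p dvd j*(x-1)*(t+1) - (x*j*(1-c) + e - j)"
    by (rule lin2[OF ht ht, of _ 1 0]) (simp add: algebra_simps)
  have nDc: "\<not> D (t+c)"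
  proof
    assume "D (t+c)"
    then obtain w h where w: "w\<in>{t,t+1}" "\<not> p dvd w" "nonzero_mth_power p m h" "p dvd (t+c) - h*w"
      using D_def by blast
    show False
    proof (cases "w = t")
      case True
      have "p dvd (e - j*c) - h*(e - j*x*c)"
        by (rule lin3[OF hA w(4) ht, of _ "-1" "j*(x-1)" h]) (simp add: True algebra_simps)
      hence "p dvd (e - j*x*c)*(h*Gz - 1)"
        by (rule lin2[OF _ hG, of _ _ "-Gz" 1]) (simp add: algebra_simps)
      moreover have "\<not> p dvd e - j*x*c" using w(2) True t_def by auto
      ultimately have "p dvd h*Gz - 1" using pcancel[OF pp] by blast
      hence "nonzero_mth_power p m Gz" using NP_inv[OF pp w(3) _ m0] by blast
      thus False using NG Gz_def by simp
    next
      case False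
      hence wt: "w = t+1" using w(1) by blast
      have "p dvd (e - j*c) - h*(x*j*(1-c) + e - j)"
        by (rule lin3[OF hA w(4) hB, of _ "-1" "j*(x-1)" h]) (simp add: wt algebra_simps)
      hence "p dvd (x*j*(1-c) + e - j)*(h*Hz - 1)"
        by (rule lin2[OF _ hH, of _ _ "-Hz" 1]) (simp add: algebra_simps)
      moreover have "\<not> p dvd (x*j*(1-c) + e - j)"
      proof
        assume "p dvd (x*j*(1-c) + e - j)"
        hence "p dvd j*(x-1)*(t+1)" using hB by (metis diff_add_cancel dvd_add)
        thus False using pcancel[OF pp njx] w(2) wt by blast
      qed
      ultimately have "p dvd h*Hz - 1" using pcancel[OF pp] by blast
      hence "nonzero_mth_power p m Hz" using NP_inv[OF pp w(3) _ m0] by blast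
      thus False using NH Hz_def by simp
    qed
  qed
  define op where "op = (\<lambda>r s. (f (s - r + t) - f t + r) mod p)"
  have oprange: "op r s \<in> {0..<p}" for r s using p0 by (simp add: op_def)
  have lat: "latin_square p op"
    unfolding latin_square_def
  proof (intro conjI ballI)
    fix r assume r: "r \<in> {0..<p}"
    have "inj_on (\<lambda>s. op r s) {0..<p}"
    proof (rule inj_onI)
      fix s1 s2 assume s: "s1 \<in> {0..<p}" "s2 \<in> {0..<p}" "op r s1 = op r s2"
      hence "p dvd (f (s1 - r + t) - f t + r) - (f (s2 - r + t) - f t + r)"
        by (simp add: op_def mod_eq_dvd_iff)
      hence "p dvd f (s1 - r + t) - f (s2 - r + t)" by simp
      hence "p dvd (s1 - r + t) - (s2 - r + t)" by (rule finj)
      hence "p dvd s1 - s2" by simp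
      thus "s1 = s2" using s range_eq by auto
    qed
    moreover have "(\<lambda>s. op r s) ` {0..<p} \<subseteq> {0..<p}" using oprange by auto
    ultimately show "bij_betw (\<lambda>s. op r s) {0..<p} {0..<p}"
      by (simp add: bij_betw_def endo_inj_surj)
  next
    fix s assume r: "s \<in> {0..<p}"
    have "inj_on (\<lambda>r. op r s) {0..<p}"
    proof (rule inj_onI)
      fix r1 r2 assume s: "r1 \<in> {0..<p}" "r2 \<in> {0..<p}" "op r1 s = op r2 s"
      hence "p dvd (f (s - r1 + t) - f t + r1) - (f (s - r2 + t) - f t + r2)"
        by (simp add: op_def mod_eq_dvd_iff)
      hence "p dvd (f (s - r1 + t) - (s - r1 + t)) - (f (s - r2 + t) - (s - r2 + t))"
        by (simp add: algebra_simps)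
      hence "p dvd (s - r1 + t) - (s - r2 + t)" by (rule ginj)
      hence "p dvd r2 - r1" by simp
      thus "r1 = r2" using s range_eq by auto
    qed
    moreover have "(\<lambda>r. op r s) ` {0..<p} \<subseteq> {0..<p}" using oprange by auto
    ultimately show "bij_betw (\<lambda>r. op r s) {0..<p} {0..<p}"
      by (simp add: bij_betw_def endo_inj_surj)
  qed
  have dc: "diag_cyclic p op"
    unfolding diag_cyclic_def
  proof (intro ballI)
    fix r s assume "r \<in> {0..<p}" "s \<in> {0..<p}"
    have a: "p dvd ((s + 1) mod p - (r + 1) mod p + t) - (s - r + t)"
      by (rule lin2[OF modd[of p "s+1"] modd[of p "r+1"], of _ 1 "-1"]) (simp add: algebra_simps)
    have "p dvd (f ((s + 1) mod p - (r + 1) mod p + t) - f t + (r+1) mod p) - (f (s - r + t) - f t + r + 1)"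
      by (rule lin2[OF fcong[OF a] modd[of p "r+1"], of _ 1 1]) (simp add: algebra_simps)
    hence "(f ((s + 1) mod p - (r + 1) mod p + t) - f t + (r+1) mod p) mod p = (f (s - r + t) - f t + r + 1) mod p"
      by (simp add: mod_eq_dvd_iff)
    thus "op ((r + 1) mod p) ((s + 1) mod p) = (op r s + 1) mod p"
      unfolding op_def by (simp add: mod_add_left_eq)
  qed
  have sub: "{(i, i, i) | i. i \<in> {0..<p}}
           \<union> {(i, (1 + i) mod p, (j + i) mod p) | i. i \<in> {0..<p}}
           \<union> {(i, (c + i) mod p, (e + i) mod p) | i. i \<in> {0..<p}}
           \<subseteq> triples p op"
  proof (intro Un_least subsetI)
    fix q assume "q \<in> {(i, i, i) | i. i \<in> {0..<p}}"
    then obtain i where i: "q = (i,i,i)" "i \<in> {0..<p}" by blast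
    have "op i i = i" using i(2) by (simp add: op_def)
    thus "q \<in> triples p op" unfolding triples_def using i by force
  next
    fix q assume "q \<in> {(i, (1 + i) mod p, (j + i) mod p) | i. i \<in> {0..<p}}"
    then obtain i where i: "q = (i, (1 + i) mod p, (j + i) mod p)" "i \<in> {0..<p}" by blast
    have a: "p dvd ((1+i) mod p - i + t) - (t+1)"
      by (rule lin2[OF modd[of p "1+i"] modd[of p "1+i"], of _ 1 0]) (simp add: algebra_simps)
    have "p dvd (f ((1+i) mod p - i + t) - f t + i) - (j + i)"
      by (rule lin3[OF fcong[OF a] fD[OF Dt1] fD[OF Dt], of _ 1 1 "-1"]) (simp add: algebra_simps)
    hence "op i ((1 + i) mod p) = (j + i) mod p" by (simp add: op_def mod_eq_dvd_iff)
    moreover have "(1 + i) mod p \<in> {0..<p}" using p0 by simp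
    ultimately show "q \<in> triples p op" unfolding triples_def using i by force
  next
    fix q assume "q \<in> {(i, (c + i) mod p, (e + i) mod p) | i. i \<in> {0..<p}}"
    then obtain i where i: "q = (i, (c + i) mod p, (e + i) mod p)" "i \<in> {0..<p}" by blast
    have a: "p dvd ((c+i) mod p - i + t) - (t+c)"
      by (rule lin2[OF modd[of p "c+i"] modd[of p "c+i"], of _ 1 0]) (simp add: algebra_simps)
    have ftc: "f (c+t) = j*x*(t+c)" using nDc f_def by (simp add: add.commute)
    have "p dvd (f ((c+i) mod p - i + t) - f t + i) - (e + i)"
      by (rule lin3[OF fcong[OF a] fD[OF Dt] ht, of _ 1 "-1" 1]) (simp add: ftc algebra_simps)
    hence "op i ((c + i) mod p) = (e + i) mod p" by (simp add: op_def mod_eq_dvd_iff)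
    moreover have "(c + i) mod p \<in> {0..<p}" using p0 by simp
    ultimately show "q \<in> triples p op" unfolding triples_def using i by force
  qed
  show ?thesis using lat dc sub by blast
qed

end
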